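(* For positive integers $x_1,\ldots,x_r$, the complete $r$-partite graph $K_{x_1,x_2,\ldots,x_r}$ satisfies $$\rho(K_{x_1,x_2,\ldots,x_r})=\sum_{i=1}^r \frac{x_i(x_i + 1)}{2}.$$
   Context: All graphs are finite and simple. $K_{x_1,\ldots,x_r}$ is the complete $r$-partite graph with parts of sizes $x_1,\ldots,x_r$. A coloring means a proper vertex coloring; an induced subgraph is rainbow if all its vertices have pairwise different colors. For a graph $H$, $\rho(H)$ is the least number $m$ such that there exists a graph $G$ on $m$ vertices such that every proper vertex coloring of $G$ contains a rainbow induced subgraph isomorphic to $H$. *)

theory Defs
  imports Main
begin

definition simple_graph :: "'a set \<Rightarrow> ('a \<Rightarrow> 'a \<Rightarrow> bool) \<Rightarrow> bool" where
  "simple_graph V E \<longleftrightarrow> finite V \<and>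
     (\<forall>u v. E u v \<longrightarrow> u \<in> V \<and> v \<in> V \<and> u \<noteq> v \<and> E v u)"

definition proper_coloring :: "'a set \<Rightarrow> ('a \<Rightarrow> 'a \<Rightarrow> bool) \<Rightarrow> ('a \<Rightarrow> nat) \<Rightarrow> bool" where
  "proper_coloring V E c \<longleftrightarrow> (\<forall>u\<in>V. \<forall>v\<in>V. E u v \<longrightarrow> c u \<noteq> c v)"

definition has_rainbow_induced_copy ::
  "'b set \<Rightarrow> ('b \<Rightarrow> 'b \<Rightarrow> bool) \<Rightarrow> 'a set \<Rightarrow> ('a \<Rightarrow> 'a \<Rightarrow> bool) \<Rightarrow> ('a \<Rightarrow> nat) \<Rightarrow> bool" where
  "has_rainbow_induced_copy VH EH V E c \<longleftrightarrow>
     (\<exists>f. inj_on f VH \<and> f ` VH \<subseteq> V \<and>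
          (\<forall>u\<in>VH. \<forall>v\<in>VH. EH u v \<longleftrightarrow> E (f u) (f v)) \<and>
          inj_on (c \<circ> f) VH)"

text \<open>rho(H): least m such that some graph on m vertices (w.l.o.g. on {0..<m})
  has a rainbow induced copy of H in every proper colouring.\<close>
definition rho :: "'b set \<Rightarrow> ('b \<Rightarrow> 'b \<Rightarrow> bool) \<Rightarrow> nat" where
  "rho VH EH = (LEAST m. \<exists>E :: nat \<Rightarrow> nat \<Rightarrow> bool. simple_graph {0..<m} E \<and>
      (\<forall>c. proper_coloring {0..<m} E c \<longrightarrow> has_rainbow_induced_copy VH EH {0..<m} E c))"

text \<open>Complete r-partite graph K_{x_0,...,x_{r-1}}: vertices (i,j) with i<r, j<x i;
  two vertices adjacent iff they lie in different parts.\<close>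
definition cmp_vertices :: "nat \<Rightarrow> (nat \<Rightarrow> nat) \<Rightarrow> (nat \<times> nat) set" where
  "cmp_vertices r x = {(i, j). i < r \<and> j < x i}"

definition cmp_edges :: "nat \<Rightarrow> (nat \<Rightarrow> nat) \<Rightarrow> nat \<times> nat \<Rightarrow> nat \<times> nat \<Rightarrow> bool" where
  "cmp_edges r x u v \<longleftrightarrow> u \<in> cmp_vertices r x \<and> v \<in> cmp_vertices r x \<and> fst u \<noteq> fst v"

end

theory Submission
  imports Defs
begin


lemma rank_sum:
  fixes B :: "nat set"
  shows "finite B \<Longrightarrow> (\<Sum>k\<in>B. card {k'\<in>B. k \<le> k'}) = card B * (card B + 1) div 2"
proof (induction "card B" arbitrary: B)
  case 0 then show ?case by simp
next
  case (Suc n)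
  then have ne: "B \<noteq> {}" by auto
  define m where "m = Min B"
  have mB: "m \<in> B" using Suc.prems ne m_def by simp
  have mle: "\<forall>k\<in>B. m \<le> k" using Suc.prems m_def by simp
  let ?B = "B - {m}"
  have cB: "card ?B = n" using Suc.hyps(2) mB Suc.prems by simp
  have IH: "(\<Sum>k\<in>?B. card {k'\<in>?B. k \<le> k'}) = n * (n + 1) div 2"
    using Suc.hyps(1)[of ?B] cB Suc.prems by simp
  have eq: "card {k'\<in>B. k \<le> k'} = card {k'\<in>?B. k \<le> k'}" if "k \<in> ?B" for k
  proof -
    have "k > m" using that mle by force
    then have "{k'\<in>B. k \<le> k'} = {k'\<in>?B. k \<le> k'}" by auto
    then show ?thesis by simp
  qed
  have "(\<Sum>k\<in>B. card {k'\<in>B. k \<le> k'}) = card {k'\<in>B. m \<le> k'} + (\<Sum>k\<in>?B. card {k'\<in>B. k \<le> k'})"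
    using Suc.prems mB by (simp add: sum.remove)
  also have "{k'\<in>B. m \<le> k'} = B" using mle by auto
  also have "(\<Sum>k\<in>?B. card {k'\<in>B. k \<le> k'}) = (\<Sum>k\<in>?B. card {k'\<in>?B. k \<le> k'})"
    using eq by (rule sum.cong[OF refl])
  finally show ?case using IH Suc.hyps(2)[symmetric] by simp
qed

lemma choose_lemma:
  fixes P :: "nat \<Rightarrow> 'a set" and c :: "'a \<Rightarrow> nat"
  shows "(\<forall>s<n. finite (P s) \<and> card (c ` P s) > s) \<Longrightarrow> \<exists>g. (\<forall>s<n. g s \<in> P s) \<and> inj_on (c \<circ> g) {..<n}"
proof (induction n)
  case 0 then show ?case by auto
next
  case (Suc n)
  have "\<forall>s<n. finite (P s) \<and> card (c ` P s) > s" using Suc.prems by auto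
  then obtain g where g: "\<forall>s<n. g s \<in> P s" "inj_on (c \<circ> g) {..<n}" using Suc.IH by blast
  have "card ((c \<circ> g) ` {..<n}) \<le> n" using card_image_le[of "{..<n}" "c \<circ> g"] by simp
  moreover have "card (c ` P n) > n" using Suc.prems by auto
  ultimately have "\<not> c ` P n \<subseteq> (c \<circ> g) ` {..<n}"
    by (meson card_mono finite_imageI finite_lessThan leD order.strict_trans1)
  then obtain y where y: "y \<in> P n" "c y \<notin> (c \<circ> g) ` {..<n}" by auto
  define g' where "g' = g(n := y)"
  have "\<forall>s<Suc n. g' s \<in> P s" using g y by (auto simp: g'_def less_Suc_eq)
  moreover have "inj_on (c \<circ> g') {..<Suc n}"
  proof -
    have "{..<Suc n} = insert n {..<n}" by auto
    moreover have "inj_on (c \<circ> g') {..<n}" using g(2) unfolding g'_def inj_on_def by auto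
    moreover have "(c \<circ> g') n \<notin> (c \<circ> g') ` {..<n}" using y by (auto simp: g'_def)
    ultimately show ?thesis by simp
  qed
  ultimately show ?case by blast
qed

lemma greedy:
  fixes E :: "'a \<Rightarrow> 'a \<Rightarrow> bool" and b :: nat
  assumes irr: "\<forall>u. \<not> E u u"
  shows "finite W \<Longrightarrow> \<exists>c. (\<forall>u\<in>W. \<forall>v\<in>W. E u v \<longrightarrow> c u \<noteq> c v) \<and> (\<forall>u\<in>W. b \<le> c u) \<and>
     (\<forall>k\<ge>b. \<forall>A. A \<subseteq> {u\<in>W. k \<le> c u} \<and> (\<forall>u\<in>A. \<forall>v\<in>A. \<not> E u v) \<longrightarrow> card A \<le> card {u\<in>W. c u = k})"
proof (induction "card W" arbitrary: W b rule: less_induct)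
  case less
  show ?case
  proof (cases "W = {}")
    case True then show ?thesis by (intro exI[of _ "\<lambda>_. b"]) auto
  next
    case False
    define Ind where "Ind = {A. A \<subseteq> W \<and> (\<forall>u\<in>A. \<forall>v\<in>A. \<not> E u v)}"
    have finI: "finite Ind" using less.prems unfolding Ind_def by (simp add: finite_subset[of _ "Pow W"] subset_iff)
    obtain w where w: "w \<in> W" using False by auto
    have wI: "{w} \<in> Ind" using w irr by (auto simp: Ind_def)
    define M where "M = Max (card ` Ind)"
    have "M \<in> card ` Ind" using finI wI M_def by (auto intro!: Max_in)
    then obtain I where I: "I \<in> Ind" "card I = M" by auto
    have maxI: "card A \<le> card I" if "A \<in> Ind" for A using finI that I M_def by simp
    have "card {w} \<le> card I" using maxI wI .
    then have "I \<noteq> {}" by auto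
    moreover have IW: "I \<subseteq> W" using I by (auto simp: Ind_def)
    ultimately have "W - I \<subset> W" by blast
    then have "card (W - I) < card W" using less.prems by (rule psubset_card_mono[rotated])
    then obtain c' where c': "\<forall>u\<in>W-I. \<forall>v\<in>W-I. E u v \<longrightarrow> c' u \<noteq> c' v" "\<forall>u\<in>W-I. b+1 \<le> c' u"
      "\<forall>k\<ge>b+1. \<forall>A. A \<subseteq> {u\<in>W-I. k \<le> c' u} \<and> (\<forall>u\<in>A. \<forall>v\<in>A. \<not> E u v) \<longrightarrow> card A \<le> card {u\<in>W-I. c' u = k}"
      using less.hyps[of "W - I" "b+1"] less.prems by auto
    define c where "c = (\<lambda>u. if u \<in> I then b else c' u)"
    have p1: "\<forall>u\<in>W. \<forall>v\<in>W. E u v \<longrightarrow> c u \<noteq> c v"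
    proof (intro ballI impI)
      fix u v assume "u \<in> W" "v \<in> W" "E u v"
      have indI: "\<forall>u\<in>I. \<forall>v\<in>I. \<not> E u v" using I(1) by (simp add: Ind_def)
      show "c u \<noteq> c v"
      proof (cases "u \<in> I"; cases "v \<in> I")
        assume "u \<in> I" "v \<in> I" then show ?thesis using indI \<open>E u v\<close> by blast
      next
        assume "u \<in> I" "v \<notin> I" then show ?thesis using c'(2) \<open>v \<in> W\<close> by (force simp: c_def)
      next
        assume "u \<notin> I" "v \<in> I" then show ?thesis using c'(2) \<open>u \<in> W\<close> by (force simp: c_def)
      next
        assume "u \<notin> I" "v \<notin> I" then show ?thesis using c'(1) \<open>u \<in> W\<close> \<open>v \<in> W\<close> \<open>E u v\<close> by (force simp: c_def)
      qed
    qed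
    have p2: "\<forall>u\<in>W. b \<le> c u" using c'(2) by (force simp: c_def)
    have p3: "card A \<le> card {u\<in>W. c u = k}"
      if k: "k \<ge> b" and A: "A \<subseteq> {u\<in>W. k \<le> c u}" "\<forall>u\<in>A. \<forall>v\<in>A. \<not> E u v" for k A
    proof (cases "k = b")
      case True
      have "A \<in> Ind" using A by (auto simp: Ind_def)
      then have "card A \<le> card I" by (rule maxI)
      also have "I \<subseteq> {u\<in>W. c u = k}" using IW True by (auto simp: c_def)
      then have "card I \<le> card {u\<in>W. c u = k}" using less.prems by (auto intro: card_mono)
      finally show ?thesis .
    next
      case False
      then have kb: "k \<ge> b + 1" using k by simp
      have "A \<subseteq> {u\<in>W-I. k \<le> c' u}" using A kb by (auto simp: c_def split: if_splits)
      then have "card A \<le> card {u\<in>W-I. c' u = k}" using c'(3) kb A by blast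
      also have "{u\<in>W-I. c' u = k} = {u\<in>W. c u = k}" using kb by (auto simp: c_def)
      finally show ?thesis .
    qed
    show ?thesis using p1 p2 p3 by blast
  qed
qed



lemma lower:
  assumes sg: "simple_graph {0..<m} E"
    and all: "\<forall>c. proper_coloring {0..<m} E c \<longrightarrow> has_rainbow_induced_copy (cmp_vertices r x) (cmp_edges r x) {0..<m} E c"
  shows "(\<Sum>i<r. x i * (x i + 1) div 2) \<le> m"
proof -
  define W where "W = {0..<m::nat}"
  have irr: "\<forall>u. \<not> E u u" using sg by (auto simp: simple_graph_def)
  have "\<exists>c::nat\<Rightarrow>nat. (\<forall>u\<in>W. \<forall>v\<in>W. E u v \<longrightarrow> c u \<noteq> c v) \<and> (\<forall>u\<in>W. 0 \<le> c u) \<and>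
     (\<forall>k\<ge>0. \<forall>A. A \<subseteq> {u\<in>W. k \<le> c u} \<and> (\<forall>u\<in>A. \<forall>v\<in>A. \<not> E u v) \<longrightarrow> card A \<le> card {u\<in>W. c u = k})"
    by (rule greedy[where E=E and b=0, OF irr]) (simp add: W_def)
  then obtain c :: "nat \<Rightarrow> nat" where cc: "(\<forall>u\<in>W. \<forall>v\<in>W. E u v \<longrightarrow> c u \<noteq> c v) \<and> (\<forall>u\<in>W. 0 \<le> c u) \<and>
     (\<forall>k\<ge>0. \<forall>A. A \<subseteq> {u\<in>W. k \<le> c u} \<and> (\<forall>u\<in>A. \<forall>v\<in>A. \<not> E u v) \<longrightarrow> card A \<le> card {u\<in>W. c u = k})"
    by (rule exE)
  note c1 = conjunct1[OF cc]
  note c3 = conjunct2[OF conjunct2[OF cc]]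
  have "proper_coloring W E c" using c1 by (simp add: proper_coloring_def)
  then have "has_rainbow_induced_copy (cmp_vertices r x) (cmp_edges r x) W E c" using all by (simp add: W_def)
  then obtain f where f1: "inj_on f (cmp_vertices r x)" and f2: "f ` cmp_vertices r x \<subseteq> W"
    and f3: "\<forall>u\<in>cmp_vertices r x. \<forall>v\<in>cmp_vertices r x. cmp_edges r x u v \<longleftrightarrow> E (f u) (f v)"
    and f4: "inj_on (c \<circ> f) (cmp_vertices r x)"
    unfolding has_rainbow_induced_copy_def by blast
  define K where "K i = (\<lambda>j. c (f (i,j))) ` {..<x i}" for i
  define cls where "cls k = {u\<in>W. c u = k}" for k
  have VH: "(i,j) \<in> cmp_vertices r x \<longleftrightarrow> i < r \<and> j < x i" for i j by (simp add: cmp_vertices_def)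
  have injc: "inj_on (\<lambda>j. c (f (i,j))) {..<x i}" if "i < r" for i
  proof (rule inj_onI)
    fix a b assume "a \<in> {..<x i}" "b \<in> {..<x i}" "c (f (i,a)) = c (f (i,b))"
    then have "(i,a) = (i,b)" by (intro inj_onD[OF f4]) (simp_all add: VH that)
    then show "a = b" by simp
  qed
  have injf: "inj_on (\<lambda>j. f (i,j)) S" if "i < r" "S \<subseteq> {..<x i}" for i S
  proof (rule inj_onI)
    fix a b assume "a \<in> S" "b \<in> S" "f (i,a) = f (i,b)"
    moreover have "a < x i" "b < x i" using that(2) \<open>a \<in> S\<close> \<open>b \<in> S\<close> by auto
    ultimately have "(i,a) = (i,b)" by (intro inj_onD[OF f1]) (simp_all add: VH that)
    then show "a = b" by simp
  qed
  have cardK: "card (K i) = x i" if "i < r" for i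
    using injc[OF that] by (simp add: K_def card_image)
  have rk: "card {k'\<in>K i. k \<le> k'} \<le> card (cls k)" if i: "i < r" and k: "k \<in> K i" for i k
  proof -
    define S where "S = {j'\<in>{..<x i}. k \<le> c (f (i,j'))}"
    define A where "A = (\<lambda>j'. f (i,j')) ` S"
    have "{k'\<in>K i. k \<le> k'} = (\<lambda>j. c (f (i,j))) ` S" by (auto simp: K_def S_def)
    then have "card {k'\<in>K i. k \<le> k'} = card S"
      using card_image[OF inj_on_subset[OF injc[OF i], of S]] by (auto simp: S_def)
    also have "card S = card A" unfolding A_def
      by (rule card_image[symmetric], rule injf[OF i]) (auto simp: S_def)
    also have "card A \<le> card (cls k)" unfolding cls_def
    proof (rule c3[rule_format])
      show "A \<subseteq> {u \<in> W. k \<le> c u} \<and> (\<forall>u\<in>A. \<forall>v\<in>A. \<not> E u v)"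
      proof
        show "A \<subseteq> {u \<in> W. k \<le> c u}" using f2 i by (auto simp: A_def S_def VH)
        show "\<forall>u\<in>A. \<forall>v\<in>A. \<not> E u v"
        proof (intro ballI)
          fix u v assume "u \<in> A" "v \<in> A"
          then obtain j1 j2 where "u = f (i,j1)" "v = f (i,j2)" "j1 < x i" "j2 < x i"
            by (auto simp: A_def S_def)
          then show "\<not> E u v" using f3[rule_format, of "(i,j1)" "(i,j2)"] i by (simp add: VH cmp_edges_def)
        qed
      qed
    qed simp
    finally show ?thesis .
  qed
  have disjK: "K i \<inter> K i' = {}" if "i < r" "i' < r" "i \<noteq> i'" for i i'
  proof (rule ccontr)
    assume "K i \<inter> K i' \<noteq> {}"
    then obtain j j' where "j < x i" "j' < x i'" "c (f (i,j)) = c (f (i',j'))" by (auto simp: K_def)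
    then have "(i,j) = (i',j')" by (intro inj_onD[OF f4]) (simp_all add: VH that)
    then show False using that by simp
  qed
  have finK: "finite (K i)" for i by (simp add: K_def)
  have "(\<Sum>i<r. x i * (x i + 1) div 2) = (\<Sum>i<r. \<Sum>k\<in>K i. card {k'\<in>K i. k \<le> k'})"
    using rank_sum[OF finK] cardK by (intro sum.cong) auto
  also have "\<dots> \<le> (\<Sum>i<r. \<Sum>k\<in>K i. card (cls k))"
    using rk by (intro sum_mono) auto
  also have "\<dots> = (\<Sum>k\<in>(\<Union>i\<in>{..<r}. K i). card (cls k))"
    by (rule sum.UNION_disjoint[symmetric]) (auto simp: finK disjK)
  also have "\<dots> = card (\<Union>k\<in>(\<Union>i\<in>{..<r}. K i). cls k)"
    by (rule card_UN_disjoint[symmetric]) (auto simp: finK cls_def W_def)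
  also have "\<dots> \<le> card W"
    by (rule card_mono) (auto simp: W_def cls_def)
  finally show ?thesis by (simp add: W_def)
qed



lemma transfer:
  fixes V :: "'a set" and E :: "'a \<Rightarrow> 'a \<Rightarrow> bool"
  assumes sg: "simple_graph V E"
    and P: "\<forall>c. proper_coloring V E c \<longrightarrow> has_rainbow_induced_copy VH EH V E c"
  shows "\<exists>E'::nat\<Rightarrow>nat\<Rightarrow>bool. simple_graph {0..<card V} E' \<and>
     (\<forall>c. proper_coloring {0..<card V} E' c \<longrightarrow> has_rainbow_induced_copy VH EH {0..<card V} E' c)"
proof -
  define n where "n = card V"
  have finV: "finite V" using sg by (simp add: simple_graph_def)
  obtain h where h: "bij_betw h {0..<n} V" using ex_bij_betw_nat_finite[OF finV] n_def by blast
  define hi where "hi = inv_into {0..<n} h"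
  have hhi: "h (hi a) = a" if "a \<in> V" for a
    using h that unfolding hi_def by (meson bij_betw_inv_into_right)
  have hiV: "hi a \<in> {0..<n}" if "a \<in> V" for a
    using h that unfolding hi_def bij_betw_def by (metis inv_into_into)
  have hV: "h u \<in> V" if "u \<in> {0..<n}" for u using h that by (meson bij_betwE)
  have injhi: "inj_on hi V" using h unfolding hi_def bij_betw_def by (metis inj_on_inv_into subset_refl)
  have hinj: "inj_on h {0..<n}" using h by (simp add: bij_betw_def)
  define E' where "E' u v \<longleftrightarrow> u \<in> {0..<n} \<and> v \<in> {0..<n} \<and> E (h u) (h v)" for u v
  have sg': "simple_graph {0..<n} E'"
    using sg unfolding simple_graph_def E'_def by auto
  have "has_rainbow_induced_copy VH EH {0..<n} E' c'" if pc: "proper_coloring {0..<n} E' c'" for c'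
  proof -
    define c where "c = c' \<circ> hi"
    have "proper_coloring V E c" unfolding proper_coloring_def
    proof (intro ballI impI)
      fix a b assume ab: "a \<in> V" "b \<in> V" "E a b"
      then have "E' (hi a) (hi b)" using hhi hiV by (simp add: E'_def)
      then show "c a \<noteq> c b" using pc hiV ab unfolding proper_coloring_def c_def by auto
    qed
    then have "has_rainbow_induced_copy VH EH V E c" using P by blast
    then obtain f where f1: "inj_on f VH" and f2: "f ` VH \<subseteq> V"
      and f3: "\<forall>u\<in>VH. \<forall>v\<in>VH. EH u v \<longleftrightarrow> E (f u) (f v)" and f4: "inj_on (c \<circ> f) VH"
      unfolding has_rainbow_induced_copy_def by blast
    define f' where "f' = hi \<circ> f"
    have "inj_on f' VH" unfolding f'_def using f1 f2 injhi by (simp add: comp_inj_on inj_on_subset)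
    moreover have "f' ` VH \<subseteq> {0..<n}" using f2 hiV by (auto simp: f'_def)
    moreover have "\<forall>u\<in>VH. \<forall>v\<in>VH. EH u v \<longleftrightarrow> E' (f' u) (f' v)"
    proof (intro ballI)
      fix u v assume uv: "u \<in> VH" "v \<in> VH"
      then have "f u \<in> V" "f v \<in> V" using f2 by auto
      then show "EH u v \<longleftrightarrow> E' (f' u) (f' v)" using f3 uv hiV hhi by (simp add: E'_def f'_def)
    qed
    moreover have "inj_on (c' \<circ> f') VH" using f4 by (simp add: c_def f'_def comp_assoc)
    ultimately show ?thesis unfolding has_rainbow_induced_copy_def by blast
  qed
  then show ?thesis using sg' n_def by blast
qed

definition GV :: "nat \<Rightarrow> (nat \<Rightarrow> nat) \<Rightarrow> (nat \<times> nat \<times> nat) set" where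
  "GV r x = (SIGMA i:{..<r}. SIGMA s:{..<x i}. {..s})"

definition GE :: "nat \<Rightarrow> (nat \<Rightarrow> nat) \<Rightarrow> nat \<times> nat \<times> nat \<Rightarrow> nat \<times> nat \<times> nat \<Rightarrow> bool" where
  "GE r x u v \<longleftrightarrow> u \<in> GV r x \<and> v \<in> GV r x \<and>
     (fst u \<noteq> fst v \<or> (fst (snd u) = fst (snd v) \<and> snd (snd u) \<noteq> snd (snd v)))"

lemma gauss: "(\<Sum>s<n. Suc s) = n * (n + 1) div 2"
  by (induction n) auto

lemma card_GV: "card (GV r x) = (\<Sum>i<r. x i * (x i + 1) div 2)"
  unfolding GV_def by (simp add: gauss)

lemma GV_mem: "(i,s,t) \<in> GV r x \<longleftrightarrow> i < r \<and> s < x i \<and> t \<le> s"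
  by (auto simp: GV_def)

lemma sg_G: "simple_graph (GV r x) (GE r x)"
  unfolding simple_graph_def GE_def GV_def by auto

lemma upper_G:
  assumes pc: "proper_coloring (GV r x) (GE r x) c"
  shows "has_rainbow_induced_copy (cmp_vertices r x) (cmp_edges r x) (GV r x) (GE r x) c"
proof -
  have "\<exists>g. (\<forall>s<x i. g s \<in> (\<lambda>t. (i,s,t)) ` {..s}) \<and> inj_on (c \<circ> g) {..<x i}" if i: "i < r" for i
  proof (rule choose_lemma, intro allI impI conjI)
    fix s assume s: "s < x i"
    show "finite ((\<lambda>t. (i,s,t)) ` {..s})" by simp
    have "inj_on (c \<circ> (\<lambda>t. (i,s,t))) {..s}"
    proof (rule inj_onI)
      fix a b assume ab: "a \<in> {..s}" "b \<in> {..s}" "(c \<circ> (\<lambda>t. (i,s,t))) a = (c \<circ> (\<lambda>t. (i,s,t))) b"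
      show "a = b"
      proof (rule ccontr)
        assume "a \<noteq> b"
        then have "GE r x (i,s,a) (i,s,b)" using ab i s by (simp add: GE_def GV_mem)
        moreover have "(i,s,a) \<in> GV r x" "(i,s,b) \<in> GV r x" using ab i s by (auto simp: GV_mem)
        ultimately have "c (i,s,a) \<noteq> c (i,s,b)" using pc unfolding proper_coloring_def by blast
        then show False using ab by simp
      qed
    qed
    then have "card ((c \<circ> (\<lambda>t. (i,s,t))) ` {..s}) = Suc s"
      by (subst card_image) auto
    then have "card (c ` (\<lambda>t. (i,s,t)) ` {..s}) = Suc s"
      by (simp add: image_comp)
    then show "s < card (c ` (\<lambda>t. (i,s,t)) ` {..s})" by simp
  qed
  then have "\<forall>i. \<exists>g. i < r \<longrightarrow> (\<forall>s<x i. g s \<in> (\<lambda>t. (i,s,t)) ` {..s}) \<and> inj_on (c \<circ> g) {..<x i}"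
    by blast
  then obtain G where G: "\<And>i. i < r \<Longrightarrow> (\<forall>s<x i. G i s \<in> (\<lambda>t. (i,s,t)) ` {..s}) \<and> inj_on (c \<circ> G i) {..<x i}"
    by metis
  define f where "f p = G (fst p) (snd p)" for p
  have VH: "(i,j) \<in> cmp_vertices r x \<longleftrightarrow> i < r \<and> j < x i" for i j by (simp add: cmp_vertices_def)
  have fform: "\<exists>t. t \<le> j \<and> f (i,j) = (i,j,t)" if "i < r" "j < x i" for i j
    using G[OF that(1)] that(2) by (auto simp: f_def)
  have f1: "inj_on f (cmp_vertices r x)"
  proof (rule inj_onI)
    fix p q assume "p \<in> cmp_vertices r x" "q \<in> cmp_vertices r x" "f p = f q"
    then show "p = q" using fform by (cases p; cases q) (fastforce simp: VH)
  qed
  have f2: "f ` cmp_vertices r x \<subseteq> GV r x"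
  proof
    fix y assume "y \<in> f ` cmp_vertices r x"
    then obtain i j where "i < r" "j < x i" "y = f (i,j)" by (auto simp: cmp_vertices_def)
    then show "y \<in> GV r x" using fform[of i j] by (auto simp: GV_mem)
  qed
  have f3: "\<forall>u\<in>cmp_vertices r x. \<forall>v\<in>cmp_vertices r x. cmp_edges r x u v \<longleftrightarrow> GE r x (f u) (f v)"
  proof (intro ballI)
    fix u v assume u: "u \<in> cmp_vertices r x" and v: "v \<in> cmp_vertices r x"
    obtain i j where ij: "u = (i,j)" "i < r" "j < x i" using u by (cases u) (auto simp: VH)
    obtain i' j' where ij': "v = (i',j')" "i' < r" "j' < x i'" using v by (cases v) (auto simp: VH)
    obtain t where t: "t \<le> j" "f (i,j) = (i,j,t)" using fform ij by blast
    obtain t' where t': "t' \<le> j'" "f (i',j') = (i',j',t')" using fform ij' by blast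
    have "f u \<in> GV r x" "f v \<in> GV r x" using f2 u v by auto
    then show "cmp_edges r x u v \<longleftrightarrow> GE r x (f u) (f v)"
      using ij ij' t t' u v by (auto simp: cmp_edges_def GE_def)
  qed
  have f4: "inj_on (c \<circ> f) (cmp_vertices r x)"
  proof (rule inj_onI)
    fix p q assume p: "p \<in> cmp_vertices r x" and q: "q \<in> cmp_vertices r x" and eq: "(c \<circ> f) p = (c \<circ> f) q"
    obtain i j where ij: "p = (i,j)" "i < r" "j < x i" using p by (cases p) (auto simp: VH)
    obtain i' j' where ij': "q = (i',j')" "i' < r" "j' < x i'" using q by (cases q) (auto simp: VH)
    show "p = q"
    proof (cases "i = i'")
      case True
      then have "(c \<circ> G i) j = (c \<circ> G i) j'" using eq ij ij' by (simp add: f_def)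
      moreover have "inj_on (c \<circ> G i) {..<x i}" using G[OF ij(2)] by blast
      ultimately have "j = j'" using ij ij' True by (meson inj_onD lessThan_iff)
      then show ?thesis using ij ij' True by simp
    next
      case False
      then have "cmp_edges r x p q" using p q ij ij' by (simp add: cmp_edges_def)
      then have "GE r x (f p) (f q)" using f3 p q by blast
      moreover have "f p \<in> GV r x" "f q \<in> GV r x" using f2 p q by auto
      ultimately have "c (f p) \<noteq> c (f q)" using pc unfolding proper_coloring_def by blast
      then show ?thesis using eq by simp
    qed
  qed
  show ?thesis unfolding has_rainbow_induced_copy_def using f1 f2 f3 f4 by blast
qed

theorem corollary2p3:
  fixes r :: nat and x :: "nat \<Rightarrow> nat"
  assumes "\<forall>i<r. 0 < x i"
  shows "rho (cmp_vertices r x) (cmp_edges r x) = (\<Sum>i<r. x i * (x i + 1) div 2)"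
  unfolding rho_def
proof (rule Least_equality)
  show "\<exists>E :: nat \<Rightarrow> nat \<Rightarrow> bool. simple_graph {0..<(\<Sum>i<r. x i * (x i + 1) div 2)} E \<and>
      (\<forall>c. proper_coloring {0..<(\<Sum>i<r. x i * (x i + 1) div 2)} E c \<longrightarrow>
         has_rainbow_induced_copy (cmp_vertices r x) (cmp_edges r x) {0..<(\<Sum>i<r. x i * (x i + 1) div 2)} E c)"
    using transfer[OF sg_G, of r x "cmp_vertices r x" "cmp_edges r x"] upper_G card_GV by simp
next
  fix m assume "\<exists>E :: nat \<Rightarrow> nat \<Rightarrow> bool. simple_graph {0..<m} E \<and>
      (\<forall>c. proper_coloring {0..<m} E c \<longrightarrow> has_rainbow_induced_copy (cmp_vertices r x) (cmp_edges r x) {0..<m} E c)"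
  then show "(\<Sum>i<r. x i * (x i + 1) div 2) \<le> m" using lower by blast
qed

end
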